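(* Let $0<\lambda<1/e$ and $E(z)=\lambda e^z$. Let $\underline s=(s_0,s_1,s_2,\dots)$ be any sequence of integers, $n\in\mathbb N$, and define $h_{\underline s,n}(u)=(L_{s_0}\circ L_{s_1}\circ\cdots\circ L_{s_n}\circ E^{n+1})(u)$ for real $u\ge\beta$. Then for all $u\ge\beta$, $$u\le\operatorname{Re}h_{\underline s,n}(u)\le u+\pi\sum_{k=1}^n\frac{2|s_k|+1}{\beta^{k-1}E^k(u)}.$$
   Context: For $0<\lambda<1/e$, $E(z)=\lambda e^z$ has real fixed points $\alpha<1<\beta$ ($\beta$ repelling). $L(x)=\log x-\log\lambda$ is the inverse of $E$ on $[\alpha,\infty)$. For $s\in\mathbb Z$, $L_s$ denotes the branch of the inverse of $E$ given by $L_s(z)=\log z-\log\lambda$, with the branch of $\log z$ whose imaginary part lies in $[(2s-1)\pi,(2s+1)\pi)$; thus $L_s$ maps into the strip $(2s-1)\pi\le\operatorname{Im}w<(2s+1)\pi$ and $\operatorname{Re}L_s(z)=L(|z|)$. $E^k$ denotes the $k$-th iterate of $E$. *)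

theory Defs
  imports "HOL-Analysis.Analysis"
begin

definition Emap :: "real \<Rightarrow> 'a::{real_normed_field,banach} \<Rightarrow> 'a" where
  "Emap lam z = of_real lam * exp z"

definition logbr :: "int \<Rightarrow> complex \<Rightarrow> complex" where
  "logbr s z = (THE w. exp w = z \<and> (2 * of_int s - 1) * pi \<le> Im w \<and> Im w < (2 * of_int s + 1) * pi)"

definition Lbr :: "real \<Rightarrow> int \<Rightarrow> complex \<Rightarrow> complex" where
  "Lbr lam s z = logbr s z - complex_of_real (ln lam)"

fun Lchain :: "real \<Rightarrow> (nat \<Rightarrow> int) \<Rightarrow> nat \<Rightarrow> complex \<Rightarrow> complex" where
  "Lchain lam s 0 = Lbr lam (s 0)"
| "Lchain lam s (Suc n) = Lchain lam s n \<circ> Lbr lam (s (Suc n))"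

definition hmap :: "real \<Rightarrow> (nat \<Rightarrow> int) \<Rightarrow> nat \<Rightarrow> real \<Rightarrow> complex" where
  "hmap lam s n u = Lchain lam s n ((Emap lam ^^ Suc n) (complex_of_real u))"

end

theory Submission
  imports Defs
begin

lemma logbr_props:
  assumes "z \<noteq> 0"
  shows "exp (logbr s z) = z \<and> (2 * of_int s - 1) * pi \<le> Im (logbr s z) \<and> Im (logbr s z) < (2 * of_int s + 1) * pi"
proof -
  define t where "t = Im (Ln z)"
  define q where "q = (t - (2 * of_int s - 1) * pi) / (2 * pi)"
  define k :: int where "k = - floor q"
  define w where "w = Ln z + complex_of_real (2 * real_of_int k * pi) * \<i>"
  have one: "exp (complex_of_real (2 * real_of_int k * pi) * \<i>) = 1"
    by (rule exp_integer_2pi) simp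
  have ex: "exp w = z"
    using assms unfolding w_def exp_add one by (simp add: exp_Ln)
  have imw: "Im w = t + 2 * pi * k" by (simp add: w_def t_def)
  have q1: "of_int (floor q) \<le> q" "q < of_int (floor q) + 1" by linarith+
  have qq: "2 * pi * q = t - (2 * of_int s - 1) * pi" using pi_gt_zero by (simp add: q_def)
  have imw2: "Im w = t - 2 * pi * of_int (floor q)" using imw by (simp add: k_def)
  have eq: "Im w = (2 * of_int s - 1) * pi + 2 * pi * (q - of_int (floor q))"
    using imw2 qq by (simp add: right_diff_distrib)
  have P: "exp w = z \<and> (2 * of_int s - 1) * pi \<le> Im w \<and> Im w < (2 * of_int s + 1) * pi"
  proof -
    have A: "0 \<le> 2 * pi * (q - of_int (floor q))" using q1 pi_gt_zero by simp
    have "q - of_int (floor q) < 1" using q1 by linarith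
    then have B: "2 * pi * (q - of_int (floor q)) < 2 * pi" using pi_gt_zero by simp
    have "(2 * of_int s - 1) * pi \<le> Im w" using eq A by linarith
    moreover have "Im w < (2 * of_int s + 1) * pi" using eq B by (simp add: algebra_simps)
    ultimately have "(2 * of_int s - 1) * pi \<le> Im w \<and> Im w < (2 * of_int s + 1) * pi" by blast
    then show ?thesis using ex by simp
  qed
  have "\<exists>!w. exp w = z \<and> (2 * of_int s - 1) * pi \<le> Im w \<and> Im w < (2 * of_int s + 1) * pi"
  proof (rule ex1I[of _ w])
    show "exp w = z \<and> (2 * of_int s - 1) * pi \<le> Im w \<and> Im w < (2 * of_int s + 1) * pi" by (rule P)
  next
    fix v assume v: "exp v = z \<and> (2 * of_int s - 1) * pi \<le> Im v \<and> Im v < (2 * of_int s + 1) * pi"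
    show "v = w"
    proof (rule exp_complex_eqI)
      show "\<bar>Im v - Im w\<bar> < 2 * pi" using v P unfolding abs_less_iff by (simp add: algebra_simps)
      show "exp v = exp w" using v P by simp
    qed
  qed
  then show ?thesis unfolding logbr_def by (rule theI')
qed

lemma Re_Lbr:
  assumes "z \<noteq> 0" "0 < lam"
  shows "Re (Lbr lam s z) = ln (cmod z) - ln lam"
proof -
  have "cmod z = exp (Re (logbr s z))"
    using logbr_props[OF assms(1), of s] norm_exp_eq_Re by metis
  then show ?thesis by (simp add: Lbr_def)
qed

lemma Im_Lbr:
  assumes "z \<noteq> 0"
  shows "\<bar>Im (Lbr lam s z)\<bar> \<le> (2 * real_of_int \<bar>s\<bar> + 1) * pi"
proof -
  have h: "(2 * of_int s - 1) * pi \<le> Im (logbr s z)" "Im (logbr s z) < (2 * of_int s + 1) * pi"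
    using logbr_props[OF assms(1), of s] by auto
  have "Im (Lbr lam s z) = Im (logbr s z)" by (simp add: Lbr_def)
  moreover have "\<bar>Im (logbr s z)\<bar> \<le> (2 * real_of_int \<bar>s\<bar> + 1) * pi"
  proof -
    have h1: "2 * (pi * real_of_int s) - pi \<le> Im (logbr s z)" "Im (logbr s z) < 2 * (pi * real_of_int s) + pi"
      using h by (simp_all add: algebra_simps)
    have g: "(2 * real_of_int \<bar>s\<bar> + 1) * pi = 2 * (pi * real_of_int \<bar>s\<bar>) + pi" by (simp add: algebra_simps)
    show ?thesis
    proof (cases "s \<ge> 0")
      case True
      then have a: "0 \<le> pi * real_of_int s" "real_of_int \<bar>s\<bar> = real_of_int s" by simp_all
      have g2: "(2 * real_of_int \<bar>s\<bar> + 1) * pi = 2 * (pi * real_of_int s) + pi" using a(2) by (simp add: algebra_simps)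
      show ?thesis unfolding abs_le_iff using h1 a(1) g2 pi_gt_zero by linarith
    next
      case False
      then have "real_of_int s \<le> 0" by simp
      then have a1: "pi * real_of_int s \<le> 0" using mult_nonneg_nonpos[OF pi_ge_zero] by blast
      have a2: "real_of_int \<bar>s\<bar> = - real_of_int s" using False by simp
      note a = a1 a2
      have g2: "(2 * real_of_int \<bar>s\<bar> + 1) * pi = pi - 2 * (pi * real_of_int s)" using a(2) by (simp add: algebra_simps)
      show ?thesis unfolding abs_le_iff using h1 a(1) g2 pi_gt_zero by linarith
    qed
  qed
  ultimately show ?thesis by simp
qed

lemma Lchain_shift:
  "Lchain lam s (Suc n) = Lbr lam (s 0) \<circ> Lchain lam (\<lambda>k. s (Suc k)) n"
proof (induction n)
  case 0
  show ?case by simp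
next
  case (Suc n)
  have "Lchain lam s (Suc (Suc n)) = Lchain lam s (Suc n) \<circ> Lbr lam (s (Suc (Suc n)))"
    by (rule Lchain.simps(2))
  also have "\<dots> = Lbr lam (s 0) \<circ> (Lchain lam (\<lambda>k. s (Suc k)) n \<circ> Lbr lam (s (Suc (Suc n))))"
    by (simp only: Suc.IH o_assoc)
  also have "\<dots> = Lbr lam (s 0) \<circ> Lchain lam (\<lambda>k. s (Suc k)) (Suc n)"
    by (simp only: Lchain.simps(2)[of lam "\<lambda>k. s (Suc k)" n])
  finally show ?case .
qed

lemma Emap_of_real: "Emap lam (complex_of_real x) = complex_of_real (Emap lam x)"
  by (simp add: Emap_def exp_of_real)

lemma Emap_funpow_of_real:
  "(Emap lam ^^ k) (complex_of_real x) = complex_of_real ((Emap lam ^^ k) x)"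
  by (induction k) (auto simp: Emap_of_real)

lemma hmap_shift:
  "hmap lam s (Suc n) u = Lbr lam (s 0) (hmap lam (\<lambda>k. s (Suc k)) n (Emap lam u))"
proof -
  have "(Emap lam ^^ Suc (Suc n)) (complex_of_real u)
      = (Emap lam ^^ Suc n) (complex_of_real (Emap lam u))"
    by (simp only: funpow_Suc_right o_apply Emap_of_real)
  then show ?thesis unfolding hmap_def Lchain_shift o_apply by (simp only:)
qed

lemma hmap0: "hmap lam s 0 u = Lbr lam (s 0) (complex_of_real (Emap lam u))"
  by (simp add: hmap_def Emap_of_real)

context
  fixes lam beta :: real
  assumes lam: "0 < lam" and fixp: "lam * exp beta = beta" and b1: "1 < beta"
begin

lemma E_ge: "beta \<le> x \<Longrightarrow> beta \<le> Emap lam x"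
  using fixp lam by (simp add: Emap_def) (metis exp_le_cancel_iff mult_left_mono less_imp_le)

lemma Ek_ge: "beta \<le> x \<Longrightarrow> beta \<le> (Emap lam ^^ k) x"
  by (induction k) (auto simp: E_ge)

lemma lnE: "ln (Emap lam x) = ln lam + x"
  using lam by (simp add: Emap_def ln_mult)

lemma ln_bound: fixes a d :: real shows "0 < a \<Longrightarrow> 0 \<le> d \<Longrightarrow> ln (a + d) \<le> ln a + d / a"
proof -
  assume a: "0 < a" and d: "0 \<le> d"
  have an: "a \<noteq> 0" using a by simp
  have "a * (d / a) = d" using an by simp
  then have "a + d = a * (1 + d / a)" by (simp add: distrib_left)
  moreover have "0 \<le> d / a" using a d by simp
  then have "0 < 1 + d / a" by linarith
  ultimately have "ln (a + d) = ln a + ln (1 + d / a)" using a by (simp add: ln_mult)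
  also have "\<dots> \<le> ln a + d / a" using ln_add_one_self_le_self[of "d/a"] a d by simp
  finally show ?thesis .
qed

lemma sum_step:
  assumes u: "beta \<le> u"
  shows "(pi * (\<Sum>k=1..n. (2 * real_of_int \<bar>s (Suc k)\<bar> + 1) / (beta ^ (k - 1) * (Emap lam ^^ k) (Emap lam u)))
          + (2 * real_of_int \<bar>s 1\<bar> + 1) * pi) / Emap lam u
       \<le> pi * (\<Sum>k=1..Suc n. (2 * real_of_int \<bar>s k\<bar> + 1) / (beta ^ (k - 1) * (Emap lam ^^ k) u))"
proof -
  let ?E = "Emap lam"
  have Eu: "beta \<le> ?E u" using E_ge u by blast
  have Epos: "0 < ?E u" using Eu b1 by linarith
  have split: "(\<Sum>k=1..Suc n. (2 * real_of_int \<bar>s k\<bar> + 1) / (beta ^ (k - 1) * (?E ^^ k) u))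
     = (2 * real_of_int \<bar>s 1\<bar> + 1) / ?E u + (\<Sum>k=1..n. (2 * real_of_int \<bar>s (Suc k)\<bar> + 1) / (beta ^ k * (?E ^^ Suc k) u))"
  proof -
    have "(\<Sum>k=1..Suc n. (2 * real_of_int \<bar>s k\<bar> + 1) / (beta ^ (k - 1) * (?E ^^ k) u))
       = (\<Sum>k=0..n. (2 * real_of_int \<bar>s (Suc k)\<bar> + 1) / (beta ^ k * (?E ^^ Suc k) u))"
      unfolding One_nat_def sum.shift_bounds_cl_Suc_ivl by simp
    also have "\<dots> = (2 * real_of_int \<bar>s 1\<bar> + 1) / ?E u + (\<Sum>k=1..n. (2 * real_of_int \<bar>s (Suc k)\<bar> + 1) / (beta ^ k * (?E ^^ Suc k) u))"
      by (subst sum.atLeast_Suc_atMost) auto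
    finally show ?thesis .
  qed
  have termw: "(2 * real_of_int \<bar>s (Suc k)\<bar> + 1) / (beta ^ (k - 1) * (?E ^^ k) (?E u)) / ?E u
      \<le> (2 * real_of_int \<bar>s (Suc k)\<bar> + 1) / (beta ^ k * (?E ^^ Suc k) u)" if k: "k \<in> {1..n}" for k
  proof -
    have X: "(?E ^^ k) (?E u) = (?E ^^ Suc k) u" by (simp only: funpow_Suc_right o_apply)
    have Xp: "0 < (?E ^^ Suc k) u" using Ek_ge[OF u, of "Suc k"] b1 by linarith
    have bk: "beta ^ k = beta * beta ^ (k - 1)" using k by (cases k) auto
    have bp: "0 < beta ^ (k - 1)" using b1 by simp
    have "beta ^ k * (?E ^^ Suc k) u \<le> beta ^ (k - 1) * (?E ^^ Suc k) u * ?E u"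
      using bk Eu bp Xp by (simp add: mult_right_mono mult.commute mult.left_commute)
    moreover have "0 < beta ^ k * (?E ^^ Suc k) u" using bp Xp b1 by simp
    ultimately show ?thesis unfolding X
      by (simp add: divide_divide_eq_left) (rule divide_left_mono, auto)
  qed
  have "(pi * (\<Sum>k=1..n. (2 * real_of_int \<bar>s (Suc k)\<bar> + 1) / (beta ^ (k - 1) * (?E ^^ k) (?E u)))
          + (2 * real_of_int \<bar>s 1\<bar> + 1) * pi) / ?E u
      = pi * ((\<Sum>k=1..n. (2 * real_of_int \<bar>s (Suc k)\<bar> + 1) / (beta ^ (k - 1) * (?E ^^ k) (?E u)) / ?E u)
          + (2 * real_of_int \<bar>s 1\<bar> + 1) / ?E u)"
  proof -
    have "(pi * (\<Sum>k=1..n. (2 * real_of_int \<bar>s (Suc k)\<bar> + 1) / (beta ^ (k - 1) * (?E ^^ k) (?E u)))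
          + (2 * real_of_int \<bar>s 1\<bar> + 1) * pi) / ?E u
      = pi * ((\<Sum>k=1..n. (2 * real_of_int \<bar>s (Suc k)\<bar> + 1) / (beta ^ (k - 1) * (?E ^^ k) (?E u))) / ?E u
          + (2 * real_of_int \<bar>s 1\<bar> + 1) / ?E u)"
      by (simp add: add_divide_distrib distrib_left mult.commute)
    then show ?thesis by (simp only: sum_divide_distrib)
  qed
  also have "\<dots> \<le> pi * ((\<Sum>k=1..n. (2 * real_of_int \<bar>s (Suc k)\<bar> + 1) / (beta ^ k * (?E ^^ Suc k) u))
          + (2 * real_of_int \<bar>s 1\<bar> + 1) / ?E u)"
    by (intro mult_left_mono add_right_mono sum_mono termw) (use pi_gt_zero in auto)
  also have "\<dots> = pi * (\<Sum>k=1..Suc n. (2 * real_of_int \<bar>s k\<bar> + 1) / (beta ^ (k - 1) * (?E ^^ k) u))"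
    using split by simp
  finally show ?thesis .
qed

lemma main:
  "\<forall>s u. beta \<le> u \<longrightarrow> u \<le> Re (hmap lam s n u) \<and>
         Re (hmap lam s n u) \<le> u + pi * (\<Sum>k=1..n. (2 * real_of_int \<bar>s k\<bar> + 1) /
                 (beta ^ (k - 1) * (Emap lam ^^ k) u)) \<and>
         \<bar>Im (hmap lam s n u)\<bar> \<le> (2 * real_of_int \<bar>s 0\<bar> + 1) * pi"
proof (induction n)
  case 0
  show ?case
  proof (intro allI impI)
    fix s :: "nat \<Rightarrow> int" and u :: real assume u: "beta \<le> u"
    have Eu: "beta \<le> Emap lam u" using E_ge u by blast
    have nz: "complex_of_real (Emap lam u) \<noteq> 0" using Eu b1 by auto
    have "Re (hmap lam s 0 u) = u"
      using Re_Lbr[OF nz lam] Eu b1 lnE by (simp add: hmap0)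
    then show "u \<le> Re (hmap lam s 0 u) \<and>
         Re (hmap lam s 0 u) \<le> u + pi * (\<Sum>k=1..0. (2 * real_of_int \<bar>s k\<bar> + 1) /
                 (beta ^ (k - 1) * (Emap lam ^^ k) u)) \<and>
         \<bar>Im (hmap lam s 0 u)\<bar> \<le> (2 * real_of_int \<bar>s 0\<bar> + 1) * pi"
      using Im_Lbr[OF nz] by (simp add: hmap0)
  qed
next
  case (Suc n)
  show ?case
  proof (intro allI impI)
    fix s :: "nat \<Rightarrow> int" and u :: real assume u: "beta \<le> u"
    let ?s' = "\<lambda>k. s (Suc k)"
    define w where "w = hmap lam ?s' n (Emap lam u)"
    have Eu: "beta \<le> Emap lam u" using E_ge u by blast
    have Epos: "0 < Emap lam u" using Eu b1 by linarith
    define S where "S = (\<Sum>k=1..n. (2 * real_of_int \<bar>s (Suc k)\<bar> + 1) / (beta ^ (k - 1) * (Emap lam ^^ k) (Emap lam u)))"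
    have IH: "Emap lam u \<le> Re w" "Re w \<le> Emap lam u + pi * S"
      "\<bar>Im w\<bar> \<le> (2 * real_of_int \<bar>s 1\<bar> + 1) * pi"
      using Suc.IH[rule_format, OF Eu, of ?s'] by (auto simp: w_def S_def)
    have S0: "0 \<le> pi * S" using IH(1,2) by linarith
    have wnz: "w \<noteq> 0" using IH(1) Epos by auto
    have h: "hmap lam s (Suc n) u = Lbr lam (s 0) w" by (simp add: hmap_shift w_def)
    have Re: "Re (hmap lam s (Suc n) u) = ln (cmod w) - ln lam"
      using Re_Lbr[OF wnz lam] h by simp
    have c1: "Emap lam u \<le> cmod w" using IH(1) abs_Re_le_cmod[of w] by linarith
    have c2: "cmod w \<le> Emap lam u + (pi * S + (2 * real_of_int \<bar>s 1\<bar> + 1) * pi)"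
      using cmod_le[of w] IH Epos by linarith
    have lo: "u \<le> Re (hmap lam s (Suc n) u)"
      using Re ln_le_cancel_iff[of "Emap lam u" "cmod w"] c1 Epos lnE[of u] wnz by simp
    have d0: "0 \<le> pi * S + (2 * real_of_int \<bar>s 1\<bar> + 1) * pi" using S0 pi_gt_zero by simp
    have "ln (cmod w) \<le> ln (Emap lam u + (pi * S + (2 * real_of_int \<bar>s 1\<bar> + 1) * pi))"
    proof -
      have p1: "0 < cmod w" using c1 Epos by linarith
      have p2: "0 < Emap lam u + (pi * S + (2 * real_of_int \<bar>s 1\<bar> + 1) * pi)" using Epos d0 by linarith
      show ?thesis using ln_le_cancel_iff[OF p1 p2] c2 by simp
    qed
    also have "\<dots> \<le> ln (Emap lam u) + (pi * S + (2 * real_of_int \<bar>s 1\<bar> + 1) * pi) / Emap lam u"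
      by (rule ln_bound[OF Epos d0])
    finally have "Re (hmap lam s (Suc n) u) \<le> u + (pi * S + (2 * real_of_int \<bar>s 1\<bar> + 1) * pi) / Emap lam u"
      using Re lnE[of u] by simp
    also have "\<dots> \<le> u + pi * (\<Sum>k=1..Suc n. (2 * real_of_int \<bar>s k\<bar> + 1) / (beta ^ (k - 1) * (Emap lam ^^ k) u))"
      using sum_step[OF u, where n=n and s=s] unfolding S_def by simp
    finally have up: "Re (hmap lam s (Suc n) u) \<le> u + pi * (\<Sum>k=1..Suc n. (2 * real_of_int \<bar>s k\<bar> + 1) / (beta ^ (k - 1) * (Emap lam ^^ k) u))" .
    have im: "\<bar>Im (hmap lam s (Suc n) u)\<bar> \<le> (2 * real_of_int \<bar>s 0\<bar> + 1) * pi"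
      using Im_Lbr[OF wnz] h by simp
    show "u \<le> Re (hmap lam s (Suc n) u) \<and>
         Re (hmap lam s (Suc n) u) \<le> u + pi * (\<Sum>k=1..Suc n. (2 * real_of_int \<bar>s k\<bar> + 1) /
                 (beta ^ (k - 1) * (Emap lam ^^ k) u)) \<and>
         \<bar>Im (hmap lam s (Suc n) u)\<bar> \<le> (2 * real_of_int \<bar>s 0\<bar> + 1) * pi"
      using lo up im by blast
  qed
qed

end

theorem lemma4p1:
  fixes lam beta u :: real and s :: "nat \<Rightarrow> int" and n :: nat
  assumes "0 < lam" and "lam < exp (-1)"
    and "lam * exp beta = beta" and "1 < beta"
    and "beta \<le> u"
  shows "u \<le> Re (hmap lam s n u) \<and>
         Re (hmap lam s n u) \<le> u + pi * (\<Sum>k=1..n. (2 * real_of_int \<bar>s k\<bar> + 1) /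
                 (beta ^ (k - 1) * (Emap lam ^^ k) u))"
  using main[OF assms(1) assms(3) assms(4), of n] assms(5) by blast

end
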